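(* Let $n\ge2$ and $k=n$. Then the nerve of the category $\pi^{-1}(\{n-1,n\})\cap V_+\pi^{-1}(\{0,\dots,n-2\})$ is weakly contractible.
   Context: $c\mathrm{Sd}^2\Lambda^n[n]$ denotes the poset whose objects are strictly increasing chains $A_0\subsetneq\dots\subsetneq A_m$ ($m\ge0$) of non-empty subsets of $[n]=\{0,\dots,n\}$ with $A_m\ne[n]$ and $A_m\ne\{0,\dots,n-1\}$, ordered by $B_\bullet\le A_\bullet$ iff each $B_j$ occurs among the $A_i$. $\pi$ sends $A_\bullet$ to $\min A_0$; for $S\subseteq[n]$, $\pi^{-1}(S)$ is the full subposet of chains with $\min A_0\in S$. For a full subposet $\mathcal{C}$, $V_+\mathcal{C}$ is the full subposet of all $d$ such that $c\le d$ for some $c\in\mathcal{C}$. *)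

theory Defs
  imports "HOL-Analysis.Analysis"
begin

text \<open>Weak contractibility: nonempty, and every continuous map from every
  k-sphere is (freely) homotopic to a constant map, i.e. all homotopy groups vanish.\<close>
definition weakly_contractible_space :: "'a topology \<Rightarrow> bool" where
  "weakly_contractible_space X \<longleftrightarrow> topspace X \<noteq> {} \<and>
     (\<forall>k f. continuous_map (nsphere k) X f \<longrightarrow>
        (\<exists>a. homotopic_with (\<lambda>_. True) (nsphere k) X f (\<lambda>_. a)))"

text \<open>Geometric realization of the nerve of a poset (P, le): the order complex,
  realized as finitely supported barycentric-coordinate functions whose support is a
  chain in P, with the subspace topology of the product topology (for finite P this is
  the standard geometric realization).\<close>
definition nerve_realization :: "'a set \<Rightarrow> ('a \<Rightarrow> 'a \<Rightarrow> bool) \<Rightarrow> ('a \<Rightarrow> real) topology" where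
  "nerve_realization P le = subtopology (powertop_real UNIV)
     {f. (\<forall>x. 0 \<le> f x) \<and> (\<forall>x. x \<notin> P \<longrightarrow> f x = 0) \<and> finite {x. f x \<noteq> 0}
         \<and> sum f {x. f x \<noteq> 0} = 1
         \<and> (\<forall>x y. f x \<noteq> 0 \<longrightarrow> f y \<noteq> 0 \<longrightarrow> le x y \<or> le y x)}"

text \<open>Objects of cSd^2 Lambda^n[n]: a strict chain A_0 < ... < A_m is represented by
  the (nonempty, totally ordered by inclusion) set {A_0,...,A_m} of nonempty subsets of
  [n] = {0..n}; the top element A_m is the union, which must differ from [n] and from
  {0,...,n-1}.  The order B <= A (each B_j occurs among the A_i) is inclusion of sets.\<close>
definition csd2_obj :: "nat \<Rightarrow> nat set set \<Rightarrow> bool" where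
  "csd2_obj n C \<longleftrightarrow> C \<noteq> {} \<and> finite C \<and>
     (\<forall>A\<in>C. A \<noteq> {} \<and> A \<subseteq> {0..n}) \<and>
     (\<forall>A\<in>C. \<forall>B\<in>C. A \<subseteq> B \<or> B \<subseteq> A) \<and>
     \<Union>C \<noteq> {0..n} \<and> \<Union>C \<noteq> {0..<n}"

definition csd2 :: "nat \<Rightarrow> nat set set set" where
  "csd2 n = {C. csd2_obj n C}"

text \<open>pi sends the chain to min A_0, where A_0 (the smallest set) is the intersection.\<close>
definition pi_map :: "nat set set \<Rightarrow> nat" where
  "pi_map C = Min (\<Inter>C)"

definition pi_inv :: "nat \<Rightarrow> nat set \<Rightarrow> nat set set set" where
  "pi_inv n S = {C \<in> csd2 n. pi_map C \<in> S}"

definition V_plus :: "nat \<Rightarrow> nat set set set \<Rightarrow> nat set set set" where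
  "V_plus n \<C> = {D \<in> csd2 n. \<exists>C\<in>\<C>. C \<subseteq> D}"

end

theory Submission
  imports Defs
begin



definition Rset :: "'a set set \<Rightarrow> ('a set \<Rightarrow> real) set" where
  "Rset P = {f. (\<forall>x. 0 \<le> f x) \<and> (\<forall>x. x \<notin> P \<longrightarrow> f x = 0) \<and> finite {x. f x \<noteq> 0}
         \<and> sum f {x. f x \<noteq> 0} = 1
         \<and> (\<forall>x y. f x \<noteq> 0 \<longrightarrow> f y \<noteq> 0 \<longrightarrow> x \<subseteq> y \<or> y \<subseteq> x)}"

lemma topspace_R: "topspace (nerve_realization P (\<subseteq>)) = Rset P"
  by (simp add: nerve_realization_def Rset_def)

lemma R_eq: "nerve_realization P (\<subseteq>) = subtopology (powertop_real UNIV) (Rset P)"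
  by (simp add: nerve_realization_def Rset_def)

definition push :: "'a set set \<Rightarrow> ('a set \<Rightarrow> 'a set) \<Rightarrow> ('a set \<Rightarrow> real) \<Rightarrow> ('a set \<Rightarrow> real)" where
  "push P r f = (\<lambda>y. \<Sum>x\<in>{x\<in>P. r x = y}. f x)"

lemma Rset_sumP:
  assumes "finite P" "f \<in> Rset P"
  shows "sum f P = 1"
proof -
  have "{x. f x \<noteq> 0} \<subseteq> P" using assms by (auto simp: Rset_def)
  then have "sum f {x. f x \<noteq> 0} = sum f P"
    by (intro sum.mono_neutral_left) (use assms in auto)
  with assms show ?thesis by (simp add: Rset_def)
qed

lemma Rset_intro:
  assumes "finite P" "\<And>x. 0 \<le> g x" "\<And>x. x \<notin> P \<Longrightarrow> g x = 0" "sum g P = 1"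
    "\<And>x y. g x \<noteq> 0 \<Longrightarrow> g y \<noteq> 0 \<Longrightarrow> x \<subseteq> y \<or> y \<subseteq> x"
  shows "g \<in> Rset P"
proof -
  have sub: "{x. g x \<noteq> 0} \<subseteq> P" using assms(3) by auto
  then have fin: "finite {x. g x \<noteq> 0}" using assms(1) finite_subset by blast
  have "sum g {x. g x \<noteq> 0} = sum g P"
    by (intro sum.mono_neutral_left) (use assms sub in auto)
  with assms fin show ?thesis by (simp add: Rset_def)
qed

lemma cont_proj:
  "continuous_map (prod_topology (top_of_set {0..1}) (nerve_realization P (\<subseteq>))) euclideanreal (\<lambda>p. snd p x)"
proof -
  have "continuous_map (nerve_realization P (\<subseteq>)) euclideanreal (\<lambda>f. f x)"
    unfolding R_eq by (intro continuous_map_from_subtopology continuous_map_product_projection) auto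
  then show ?thesis
    using continuous_map_compose[OF continuous_map_snd] by (auto simp: o_def)
qed

lemma cont_fst:
  "continuous_map (prod_topology (top_of_set {0..1}) X) euclideanreal fst"
  by (rule continuous_map_into_fulltopology[OF continuous_map_fst])

definition Gs :: "'a set set \<Rightarrow> ('a set \<Rightarrow> real) \<Rightarrow> 'a set \<Rightarrow> real" where
  "Gs P f x = (\<Sum>z\<in>{z\<in>P. x \<subset> z}. f z)"

definition aw :: "'a set set \<Rightarrow> real \<Rightarrow> ('a set \<Rightarrow> real) \<Rightarrow> 'a set \<Rightarrow> real" where
  "aw P t f x = max 0 (min (f x) (t - Gs P f x))"

lemma cG: "finite P \<Longrightarrow> continuous_map (prod_topology (top_of_set {0..1}) (nerve_realization P (\<subseteq>))) euclideanreal (\<lambda>p. Gs P (snd p) x)"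
  unfolding Gs_def by (rule continuous_map_sum) (auto intro: cont_proj)

lemma ca: "finite P \<Longrightarrow> continuous_map (prod_topology (top_of_set {0..1}) (nerve_realization P (\<subseteq>))) euclideanreal (\<lambda>p. aw P (fst p) (snd p) x)"
  unfolding aw_def
  by (rule continuous_map_real_max[OF _ continuous_map_real_min[OF cont_proj continuous_map_diff[OF cont_fst cG]]]) simp_all

definition Hpr :: "'a set set \<Rightarrow> ('a set \<Rightarrow> 'a set) \<Rightarrow> ('a set \<Rightarrow> 'a set) \<Rightarrow> real \<Rightarrow> ('a set \<Rightarrow> real) \<Rightarrow> ('a set \<Rightarrow> real)" where
  "Hpr P r s t f = (\<lambda>y. (\<Sum>x\<in>{x\<in>P. r x = y}. f x - aw P t f x) + (\<Sum>x\<in>{x\<in>P. s x = y}. aw P t f x))"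

lemma sum_ne0_ex: "sum g A \<noteq> 0 \<Longrightarrow> \<exists>x\<in>A. g x \<noteq> 0"
  by (meson sum.neutral)

lemma Gs_nonneg: "f \<in> Rset P \<Longrightarrow> 0 \<le> Gs P f x"
  unfolding Gs_def by (intro sum_nonneg) (auto simp: Rset_def)

lemma aw_bounds: "f \<in> Rset P \<Longrightarrow> 0 \<le> aw P t f x \<and> aw P t f x \<le> f x"
  unfolding aw_def by (auto simp: Rset_def)

lemma Gs_strict:
  assumes "finite P" "f \<in> Rset P" "x1 \<in> P" "x2 \<subset> x1"
  shows "Gs P f x1 + f x1 \<le> Gs P f x2"
proof -
  have "Gs P f x1 + f x1 = sum f (insert x1 {z\<in>P. x1 \<subset> z})"
    unfolding Gs_def using assms by (subst sum.insert) auto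
  also have "\<dots> \<le> sum f {z\<in>P. x2 \<subset> z}"
    by (rule sum_mono2) (use assms in \<open>auto simp: Rset_def\<close>)
  finally show ?thesis unfolding Gs_def .
qed

lemma Gs_le1:
  assumes "finite P" "f \<in> Rset P" "x \<in> P"
  shows "Gs P f x + f x \<le> 1"
proof -
  have "Gs P f x + f x = sum f (insert x {z\<in>P. x \<subset> z})"
    unfolding Gs_def using assms by (subst sum.insert) auto
  also have "\<dots> \<le> sum f P"
    by (rule sum_mono2) (use assms in \<open>auto simp: Rset_def\<close>)
  finally show ?thesis using Rset_sumP[OF assms(1,2)] by simp
qed

lemma low_high:
  assumes "finite P" "f \<in> Rset P" "x1 \<in> P" "x2 \<subset> x1"
    and low: "f x1 - aw P t f x1 \<noteq> 0" and high: "aw P t f x2 \<noteq> 0"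
  shows False
proof -
  have "0 \<le> f x1" using assms(2) by (auto simp: Rset_def)
  then have "t - Gs P f x1 < f x1" using low aw_bounds[OF assms(2)] unfolding aw_def
    by (auto simp: min_def max_def split: if_splits)
  moreover have "Gs P f x2 < t" using high aw_bounds[OF assms(2), of t x2] unfolding aw_def
    by (auto simp: min_def max_def split: if_splits)
  moreover note Gs_strict[OF assms(1-4)]
  ultimately show False by linarith
qed

lemma prism:
  fixes P :: "'a set set"
  assumes fin: "finite P" and rP: "\<And>x. x \<in> P \<Longrightarrow> r x \<in> P" and sP: "\<And>x. x \<in> P \<Longrightarrow> s x \<in> P"
    and rm: "\<And>x y. x \<in> P \<Longrightarrow> y \<in> P \<Longrightarrow> x \<subseteq> y \<Longrightarrow> r x \<subseteq> r y"
    and sm: "\<And>x y. x \<in> P \<Longrightarrow> y \<in> P \<Longrightarrow> x \<subseteq> y \<Longrightarrow> s x \<subseteq> s y"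
    and rs: "\<And>x. x \<in> P \<Longrightarrow> r x \<subseteq> s x"
  shows "homotopic_with (\<lambda>_. True) (nerve_realization P (\<subseteq>)) (nerve_realization P (\<subseteq>)) (push P r) (push P s)"
proof -
  let ?X = "nerve_realization P (\<subseteq>)"
  have inR: "Hpr P r s t f \<in> Rset P" if f: "f \<in> Rset P" and t: "t \<in> {0..1}" for t f
  proof (rule Rset_intro[OF fin])
    note ab = aw_bounds[OF f]
    show "0 \<le> Hpr P r s t f y" for y
      unfolding Hpr_def using ab by (intro add_nonneg_nonneg sum_nonneg) (auto simp: algebra_simps)
    show "Hpr P r s t f y = 0" if "y \<notin> P" for y
    proof -
      have e1: "{x\<in>P. r x = y} = {}" and e2: "{x\<in>P. s x = y} = {}" using rP sP that by auto
      show ?thesis by (simp only: Hpr_def e1 e2 sum.empty add_0)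
    qed
    have g1: "(\<Sum>y\<in>P. \<Sum>x\<in>{x\<in>P. r x = y}. f x - aw P t f x) = (\<Sum>x\<in>P. f x - aw P t f x)"
      by (rule sum.group[OF fin fin]) (use rP in blast)
    have g2: "(\<Sum>y\<in>P. \<Sum>x\<in>{x\<in>P. s x = y}. aw P t f x) = (\<Sum>x\<in>P. aw P t f x)"
      by (rule sum.group[OF fin fin]) (use sP in blast)
    have "sum (Hpr P r s t f) P = (\<Sum>x\<in>P. f x - aw P t f x) + (\<Sum>x\<in>P. aw P t f x)"
      unfolding Hpr_def sum.distrib g1 g2 by (rule refl)
    also have "\<dots> = sum f P" by (simp add: sum_subtractf)
    finally show "sum (Hpr P r s t f) P = 1" using Rset_sumP[OF fin f] by simp
    show "y1 \<subseteq> y2 \<or> y2 \<subseteq> y1" if y1: "Hpr P r s t f y1 \<noteq> 0" and y2: "Hpr P r s t f y2 \<noteq> 0" for y1 y2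
    proof -
      have ex: "\<exists>x\<in>P. (r x = y \<and> f x - aw P t f x \<noteq> 0) \<or> (s x = y \<and> aw P t f x \<noteq> 0)"
        if "Hpr P r s t f y \<noteq> 0" for y
      proof -
        from that have "(\<Sum>x\<in>{x\<in>P. r x = y}. f x - aw P t f x) \<noteq> 0 \<or> (\<Sum>x\<in>{x\<in>P. s x = y}. aw P t f x) \<noteq> 0"
          unfolding Hpr_def by auto
        then show ?thesis by (auto dest!: sum_ne0_ex)
      qed
      have supp: "f x \<noteq> 0" if "f x - aw P t f x \<noteq> 0 \<or> aw P t f x \<noteq> 0" for x
        using that ab[of t x] by auto
      have ch: "x \<subseteq> x' \<or> x' \<subseteq> x" if "f x \<noteq> 0" "f x' \<noteq> 0" for x x'
        using f that by (auto simp: Rset_def)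
      obtain x1 where x1: "x1 \<in> P" "(r x1 = y1 \<and> f x1 - aw P t f x1 \<noteq> 0) \<or> (s x1 = y1 \<and> aw P t f x1 \<noteq> 0)"
        using ex[OF y1] by blast
      obtain x2 where x2: "x2 \<in> P" "(r x2 = y2 \<and> f x2 - aw P t f x2 \<noteq> 0) \<or> (s x2 = y2 \<and> aw P t f x2 \<noteq> 0)"
        using ex[OF y2] by blast
      have c12: "x1 \<subseteq> x2 \<or> x2 \<subseteq> x1" using ch supp x1 x2 by metis
      have LH: "r u \<subseteq> s v \<or> s v \<subseteq> r u" if "u \<in> P" "v \<in> P" "u \<subseteq> v \<or> v \<subseteq> u"
         "f u - aw P t f u \<noteq> 0" "aw P t f v \<noteq> 0" for u v
      proof (cases "u \<subseteq> v")
        case True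
        then show ?thesis using rm[OF that(1,2) True] rs[OF that(2)] by blast
      next
        case False
        then have "v \<subset> u" using that(3) by blast
        with low_high[OF fin f that(1) this that(4,5)] show ?thesis by blast
      qed
      show ?thesis
      proof (cases "r x1 = y1 \<and> f x1 - aw P t f x1 \<noteq> 0")
        case A: True
        show ?thesis
        proof (cases "r x2 = y2 \<and> f x2 - aw P t f x2 \<noteq> 0")
          case True
          then show ?thesis using A c12 rm[OF x1(1) x2(1)] rm[OF x2(1) x1(1)] by blast
        next
          case False
          then have "s x2 = y2" "aw P t f x2 \<noteq> 0" using x2 by auto
          then show ?thesis using A LH[OF x1(1) x2(1) c12] by blast
        qed
      next
        case B: False
        then have B1: "s x1 = y1" "aw P t f x1 \<noteq> 0" using x1 by auto
        show ?thesis
        proof (cases "r x2 = y2 \<and> f x2 - aw P t f x2 \<noteq> 0")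
          case True
          then show ?thesis using B1 LH[OF x2(1) x1(1)] c12 by blast
        next
          case False
          then have "s x2 = y2" using x2 by auto
          then show ?thesis using B1 c12 sm[OF x1(1) x2(1)] sm[OF x2(1) x1(1)] by blast
        qed
      qed
    qed
  qed
  have H0: "Hpr P r s 0 f = push P r f" if f: "f \<in> Rset P" for f
  proof -
    have "aw P 0 f x = 0" for x using Gs_nonneg[OF f, of x] aw_bounds[OF f, of 0 x]
      unfolding aw_def by (auto simp: max_def min_def)
    then show ?thesis unfolding Hpr_def push_def by simp
  qed
  have H1: "Hpr P r s 1 f = push P s f" if f: "f \<in> Rset P" for f
  proof -
    have "aw P 1 f x = f x" if "x \<in> P" for x using Gs_le1[OF fin f that] aw_bounds[OF f, of 1 x]
      unfolding aw_def by (auto simp: max_def min_def)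
    then show ?thesis unfolding Hpr_def push_def by simp
  qed
  have cont: "continuous_map (prod_topology (top_of_set {0..1}) ?X) ?X (\<lambda>p. Hpr P r s (fst p) (snd p))"
  proof -
    have "continuous_map (prod_topology (top_of_set {0..1}) ?X) euclideanreal (\<lambda>p. Hpr P r s (fst p) (snd p) y)" for y
      unfolding Hpr_def using fin by (intro continuous_map_add continuous_map_sum continuous_map_diff cont_proj ca; simp)
    then have "continuous_map (prod_topology (top_of_set {0..1}) ?X) (powertop_real UNIV) (\<lambda>p. Hpr P r s (fst p) (snd p))"
      by (simp add: continuous_map_componentwise_UNIV)
    moreover have "(\<lambda>p. Hpr P r s (fst p) (snd p)) \<in> topspace (prod_topology (top_of_set {0..1}) ?X) \<rightarrow> Rset P"
      using inR by (auto simp: topspace_R)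
    ultimately have "continuous_map (prod_topology (top_of_set {0..1}) ?X) (subtopology (powertop_real UNIV) (Rset P)) (\<lambda>p. Hpr P r s (fst p) (snd p))"
      by (rule continuous_map_into_subtopology)
    then show ?thesis by (simp only: R_eq[symmetric])
  qed
  show ?thesis
    apply (subst homotopic_with)
     apply simp
    apply (rule exI[of _ "\<lambda>p. Hpr P r s (fst p) (snd p)"])
    using cont H0 H1 by (simp add: topspace_R)
qed




definition Lset :: "nat \<Rightarrow> nat set \<Rightarrow> bool" where
  "Lset n A \<longleftrightarrow> A \<noteq> {} \<and> A \<subseteq> {0..n} \<and> A \<noteq> {0..n} \<and> A \<noteq> {0..<n}"

definition Good :: "nat \<Rightarrow> nat set set \<Rightarrow> bool" where
  "Good n C \<longleftrightarrow> C \<noteq> {} \<and> finite C \<and> (\<forall>A\<in>C. Lset n A) \<and> (\<forall>A\<in>C. \<forall>B\<in>C. A \<subseteq> B \<or> B \<subseteq> A)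
     \<and> (\<exists>A\<in>C. A \<subseteq> {n-1,n}) \<and> (\<exists>A\<in>C. \<exists>x\<in>A. x \<le> n-2)"

lemma chain_max:
  assumes "finite C" "C \<noteq> {}" "\<forall>A\<in>C. \<forall>B\<in>C. A \<subseteq> B \<or> B \<subseteq> A"
  shows "\<exists>M\<in>C. \<forall>A\<in>C. A \<subseteq> M"
  using assms
proof (induction C rule: finite_ne_induct)
  case (singleton x) then show ?case by auto
next
  case (insert x F)
  then obtain M where M: "M \<in> F" "\<forall>A\<in>F. A \<subseteq> M" by auto
  show ?case
  proof (cases "x \<subseteq> M")
    case True then show ?thesis using M by auto
  next
    case False then have "M \<subseteq> x" using insert.prems M by auto
    then show ?thesis using M by auto
  qed
qed

lemma chain_min:
  assumes "finite C" "C \<noteq> {}" "\<forall>A\<in>C. \<forall>B\<in>C. A \<subseteq> B \<or> B \<subseteq> A"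
  shows "\<exists>m\<in>C. \<forall>A\<in>C. m \<subseteq> A"
  using assms
proof (induction C rule: finite_ne_induct)
  case (singleton x) then show ?case by auto
next
  case (insert x F)
  then obtain M where M: "M \<in> F" "\<forall>A\<in>F. M \<subseteq> A" by auto
  show ?case
  proof (cases "M \<subseteq> x")
    case True then show ?thesis using M by auto
  next
    case False then have "x \<subseteq> M" using insert.prems M by auto
    then show ?thesis using M by auto
  qed
qed

lemma between_n:
  assumes "{0..<n} \<subseteq> U" "U \<subseteq> {0..(n::nat)}"
  shows "U = {0..<n} \<or> U = {0..n}"
proof (cases "n \<in> U")
  case True
  then have "U = {0..n}" using assms by (auto simp: less_Suc_eq_le[symmetric] atLeastLessThanSuc_atLeastAtMost[symmetric])
    (metis atLeastLessThan_iff le_imp_less_Suc le_neq_implies_less less_Suc_eq subsetD zero_le)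
  then show ?thesis ..
next
  case False
  then have "U = {0..<n}" using assms by (auto simp: subset_iff) (metis le_neq_implies_less)
  then show ?thesis ..
qed

lemma csd2_obj_iff:
  "csd2_obj n C \<longleftrightarrow> C \<noteq> {} \<and> finite C \<and> (\<forall>A\<in>C. Lset n A) \<and> (\<forall>A\<in>C. \<forall>B\<in>C. A \<subseteq> B \<or> B \<subseteq> A)"
proof
  assume H: "csd2_obj n C"
  have "Lset n A" if A: "A \<in> C" for A
  proof -
    have sub: "\<Union>C \<subseteq> {0..n}" using H by (auto simp: csd2_obj_def)
    have "A \<noteq> {0..n}"
    proof
      assume "A = {0..n}"
      then have "\<Union>C = {0..n}" using A sub by auto
      then show False using H by (auto simp: csd2_obj_def)
    qed
    moreover have "A \<noteq> {0..<n}"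
    proof
      assume "A = {0..<n}"
      then have "{0..<n} \<subseteq> \<Union>C" using A by auto
      then have "\<Union>C = {0..<n} \<or> \<Union>C = {0..n}" using between_n sub by blast
      then show False using H by (auto simp: csd2_obj_def)
    qed
    ultimately show ?thesis using H A by (auto simp: csd2_obj_def Lset_def)
  qed
  then show "C \<noteq> {} \<and> finite C \<and> (\<forall>A\<in>C. Lset n A) \<and> (\<forall>A\<in>C. \<forall>B\<in>C. A \<subseteq> B \<or> B \<subseteq> A)"
    using H by (auto simp: csd2_obj_def)
next
  assume H: "C \<noteq> {} \<and> finite C \<and> (\<forall>A\<in>C. Lset n A) \<and> (\<forall>A\<in>C. \<forall>B\<in>C. A \<subseteq> B \<or> B \<subseteq> A)"
  then obtain M where M: "M \<in> C" "\<forall>A\<in>C. A \<subseteq> M" using chain_max by meson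
  then have "\<Union>C = M" by auto
  with M H show "csd2_obj n C" by (auto simp: csd2_obj_def Lset_def)
qed

lemma pi_map_bot:
  assumes "C \<noteq> {}" "finite C" "\<forall>A\<in>C. Lset n A" "\<forall>A\<in>C. \<forall>B\<in>C. A \<subseteq> B \<or> B \<subseteq> A"
  shows "pi_map C \<in> {n-1,n} \<longleftrightarrow> (\<exists>A\<in>C. A \<subseteq> {n-1,n})"
proof -
  obtain m where m: "m \<in> C" "\<forall>A\<in>C. m \<subseteq> A" using chain_min assms by meson
  then have I: "\<Inter>C = m" by auto
  have mL: "m \<noteq> {}" "m \<subseteq> {0..n}" using m assms(3) by (auto simp: Lset_def)
  then have fm: "finite m" using finite_subset by blast
  have Mm: "Min m \<in> m" using fm mL by simp
  show ?thesis
  proof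
    assume "pi_map C \<in> {n-1,n}"
    then have P: "Min m \<in> {n-1,n}" using I by (simp add: pi_map_def)
    have "m \<subseteq> {n-1,n}"
    proof
      fix x assume x: "x \<in> m"
      then have "Min m \<le> x" using fm by simp
      moreover have "x \<le> n" using x mL by auto
      ultimately show "x \<in> {n-1,n}" using P by auto
    qed
    then show "\<exists>A\<in>C. A \<subseteq> {n-1,n}" using m by blast
  next
    assume "\<exists>A\<in>C. A \<subseteq> {n-1,n}"
    then obtain A where "A \<in> C" "A \<subseteq> {n-1,n}" by blast
    then have "m \<subseteq> {n-1,n}" using m by blast
    then show "pi_map C \<in> {n-1,n}" using I Mm by (auto simp: pi_map_def)
  qed
qed

lemma P_eq:
  assumes "n \<ge> 2"
  shows "pi_inv n {n - 1, n} \<inter> V_plus n (pi_inv n {0..n - 2}) = {C. Good n C}"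
proof (intro set_eqI iffI)
  fix C assume C: "C \<in> pi_inv n {n - 1, n} \<inter> V_plus n (pi_inv n {0..n - 2})"
  then have co: "csd2_obj n C" by (auto simp: pi_inv_def csd2_def)
  then have H: "C \<noteq> {}" "finite C" "\<forall>A\<in>C. Lset n A" "\<forall>A\<in>C. \<forall>B\<in>C. A \<subseteq> B \<or> B \<subseteq> A"
    by (auto simp: csd2_obj_iff)
  have b: "\<exists>A\<in>C. A \<subseteq> {n-1,n}" using pi_map_bot[OF H] C by (auto simp: pi_inv_def)
  from C obtain C' where C': "C' \<in> pi_inv n {0..n-2}" "C' \<subseteq> C" by (auto simp: V_plus_def)
  then have co': "csd2_obj n C'" and pm: "pi_map C' \<le> n-2" by (auto simp: pi_inv_def csd2_def)
  then have H': "C' \<noteq> {}" "finite C'" "\<forall>A\<in>C'. Lset n A" "\<forall>A\<in>C'. \<forall>B\<in>C'. A \<subseteq> B \<or> B \<subseteq> A"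
    by (auto simp: csd2_obj_iff)
  obtain m where m: "m \<in> C'" "\<forall>A\<in>C'. m \<subseteq> A" using chain_min H' by meson
  then have I: "\<Inter>C' = m" by auto
  have mL: "m \<noteq> {}" "m \<subseteq> {0..n}" using m H' by (auto simp: Lset_def)
  then have "Min m \<in> m" using finite_subset by (metis Min_in finite_atLeastAtMost)
  then have t: "\<exists>A\<in>C. \<exists>x\<in>A. x \<le> n-2" using m C' pm I by (auto simp: pi_map_def)
  show "C \<in> {C. Good n C}" using H b t by (simp add: Good_def)
next
  fix C assume "C \<in> {C. Good n C}"
  then have G: "Good n C" by simp
  then have H: "C \<noteq> {}" "finite C" "\<forall>A\<in>C. Lset n A" "\<forall>A\<in>C. \<forall>B\<in>C. A \<subseteq> B \<or> B \<subseteq> A"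
    by (auto simp: Good_def)
  then have co: "csd2_obj n C" by (simp add: csd2_obj_iff)
  have "pi_map C \<in> {n-1,n}" using pi_map_bot[OF H] G by (auto simp: Good_def)
  then have c1: "C \<in> pi_inv n {n - 1, n}" using co by (simp add: pi_inv_def csd2_def)
  obtain A x where Ax: "A \<in> C" "x \<in> A" "x \<le> n-2" using G by (auto simp: Good_def)
  have LA: "Lset n A" using H Ax by auto
  then have coA: "csd2_obj n {A}" by (simp add: csd2_obj_iff)
  have fA: "finite A" using LA finite_subset by (auto simp: Lset_def)
  have "pi_map {A} \<le> n-2" using Ax fA by (simp add: pi_map_def) (meson Min_le dual_order.trans)
  then have "{A} \<in> pi_inv n {0..n-2}" using coA by (simp add: pi_inv_def csd2_def)
  then have "C \<in> V_plus n (pi_inv n {0..n - 2})" using co Ax by (auto simp: V_plus_def csd2_def)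
  with c1 show "C \<in> pi_inv n {n - 1, n} \<inter> V_plus n (pi_inv n {0..n - 2})" by simp
qed




lemma finite_Good: "finite {C. Good n C}"
proof (rule finite_subset)
  show "{C. Good n C} \<subseteq> Pow (Pow {0..n})"
  proof
    fix C assume "C \<in> {C. Good n C}"
    then have "\<forall>A\<in>C. Lset n A" unfolding Good_def by blast
    then show "C \<in> Pow (Pow {0..n})" unfolding Lset_def by blast
  qed
qed auto

lemma good_img:
  assumes LF: "\<And>A. Lset n A \<Longrightarrow> Lset n (f A)"
    and MF: "\<And>A B. Lset n A \<Longrightarrow> Lset n B \<Longrightarrow> A \<subseteq> B \<Longrightarrow> f A \<subseteq> f B"
    and BF: "\<And>A. Lset n A \<Longrightarrow> A \<subseteq> {n-1,n} \<Longrightarrow> f A \<subseteq> {n-1,n}"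
    and TF: "\<And>A x. Lset n A \<Longrightarrow> x \<in> A \<Longrightarrow> x \<le> n-2 \<Longrightarrow> \<exists>y\<in>f A. y \<le> n-2"
    and G: "Good n C"
  shows "Good n (f ` C)"
proof -
  have ch: "\<forall>A\<in>C. \<forall>B\<in>C. A \<subseteq> B \<or> B \<subseteq> A" and L: "\<forall>A\<in>C. Lset n A" 
    and ne: "C \<noteq> {}" and fin: "finite C"
    and b: "\<exists>A\<in>C. A \<subseteq> {n-1,n}" and tp: "\<exists>A\<in>C. \<exists>x\<in>A. x \<le> n-2"
    using G unfolding Good_def by blast+
  have c1: "\<forall>X\<in>f`C. \<forall>Y\<in>f`C. X \<subseteq> Y \<or> Y \<subseteq> X"
  proof (intro ballI)
    fix X Y assume "X \<in> f`C" "Y \<in> f`C"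
    then obtain A B where "A \<in> C" "B \<in> C" "X = f A" "Y = f B" by blast
    moreover have "A \<subseteq> B \<or> B \<subseteq> A" "Lset n A" "Lset n B" using ch L \<open>A \<in> C\<close> \<open>B \<in> C\<close> by blast+
    ultimately show "X \<subseteq> Y \<or> Y \<subseteq> X" using MF by blast
  qed
  from b obtain A where A: "A \<in> C" "A \<subseteq> {n-1,n}" by blast
  have c2: "\<exists>X\<in>f`C. X \<subseteq> {n-1,n}" using BF[of A] A L by blast
  from tp obtain A' x where A': "A' \<in> C" "x \<in> A'" "x \<le> n-2" by blast
  have c3: "\<exists>X\<in>f`C. \<exists>y\<in>X. y \<le> n-2" using TF[of A' x] A' L by blast
  have c4: "f ` C \<noteq> {}" "finite (f ` C)" using ne fin by auto
  have c5: "\<forall>X\<in>f`C. Lset n X" using L LF by blast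
  show ?thesis unfolding Good_def using c1 c2 c3 c4 c5 by (intro conjI)
qed

lemma good_union:
  assumes LF: "\<And>A. Lset n A \<Longrightarrow> Lset n (f A)"
    and MF: "\<And>A B. Lset n A \<Longrightarrow> Lset n B \<Longrightarrow> A \<subseteq> B \<Longrightarrow> f A \<subseteq> f B"
    and BF: "\<And>A. Lset n A \<Longrightarrow> A \<subseteq> {n-1,n} \<Longrightarrow> f A \<subseteq> {n-1,n}"
    and TF: "\<And>A x. Lset n A \<Longrightarrow> x \<in> A \<Longrightarrow> x \<le> n-2 \<Longrightarrow> \<exists>y\<in>f A. y \<le> n-2"
    and LG: "\<And>A. Lset n A \<Longrightarrow> Lset n (g A)"
    and MG: "\<And>A B. Lset n A \<Longrightarrow> Lset n B \<Longrightarrow> A \<subseteq> B \<Longrightarrow> g A \<subseteq> g B"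
    and XX: "\<And>A B. Lset n A \<Longrightarrow> Lset n B \<Longrightarrow> A \<subseteq> B \<or> B \<subseteq> A \<Longrightarrow> f A \<subseteq> g B \<or> g B \<subseteq> f A"
    and G: "Good n C"
  shows "Good n (f ` C \<union> g ` C)"
proof -
  have GF: "Good n (f ` C)" by (rule good_img[OF LF MF BF TF G])
  have ch: "\<forall>A\<in>C. \<forall>B\<in>C. A \<subseteq> B \<or> B \<subseteq> A" and L: "\<forall>A\<in>C. Lset n A" using G unfolding Good_def by blast+
  have c1: "\<forall>U\<in>f`C. \<forall>V\<in>f`C. U \<subseteq> V \<or> V \<subseteq> U" using GF by (simp add: Good_def)
  have c2: "\<forall>U\<in>g`C. \<forall>V\<in>g`C. U \<subseteq> V \<or> V \<subseteq> U"
  proof (intro ballI)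
    fix X Y assume "X \<in> g`C" "Y \<in> g`C"
    then obtain A B where "A \<in> C" "B \<in> C" "X = g A" "Y = g B" by blast
    moreover have "A \<subseteq> B \<or> B \<subseteq> A" "Lset n A" "Lset n B" using ch L \<open>A \<in> C\<close> \<open>B \<in> C\<close> by blast+
    ultimately show "X \<subseteq> Y \<or> Y \<subseteq> X" using MG by blast
  qed
  have c3: "\<forall>U\<in>f`C. \<forall>V\<in>g`C. U \<subseteq> V \<or> V \<subseteq> U"
  proof (intro ballI)
    fix X Y assume "X \<in> f`C" "Y \<in> g`C"
    then obtain A B where "A \<in> C" "B \<in> C" "X = f A" "Y = g B" by blast
    moreover have "A \<subseteq> B \<or> B \<subseteq> A" "Lset n A" "Lset n B" using ch L \<open>A \<in> C\<close> \<open>B \<in> C\<close> by blast+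
    ultimately show "X \<subseteq> Y \<or> Y \<subseteq> X" using XX by blast
  qed
  have d1: "\<forall>U\<in>f`C \<union> g`C. \<forall>V\<in>f`C \<union> g`C. U \<subseteq> V \<or> V \<subseteq> U"
  proof (intro ballI)
    fix U V assume U: "U \<in> f`C \<union> g`C" and V: "V \<in> f`C \<union> g`C"
    show "U \<subseteq> V \<or> V \<subseteq> U"
    proof (cases "U \<in> f`C")
      case True
      show ?thesis
      proof (cases "V \<in> f`C")
        case True2: True
        show ?thesis using c1 True True2 by blast
      next
        case False
        then have "V \<in> g`C" using V by blast
        then show ?thesis using c3 True by blast
      qed
    next
      case False
      then have "U \<in> g`C" using U by blast
      note Ug = this
      show ?thesis
      proof (cases "V \<in> f`C")
        case True2: True
        show ?thesis using c3 Ug True2 by blast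
      next
        case False
        then have "V \<in> g`C" using V by blast
        then show ?thesis using c2 Ug by blast
      qed
    qed
  qed
  have d2: "f ` C \<union> g ` C \<noteq> {}" "finite (f ` C \<union> g ` C)" using G unfolding Good_def by auto
  have d3: "\<forall>X\<in>f ` C \<union> g ` C. Lset n X" using L LF LG by blast
  have e1: "\<exists>X\<in>f ` C. X \<subseteq> {n-1,n}" using GF unfolding Good_def by blast
  have e2: "\<exists>X\<in>f ` C. \<exists>y\<in>X. y \<le> n-2" using GF unfolding Good_def by blast
  have d4: "\<exists>X\<in>f ` C \<union> g ` C. X \<subseteq> {n-1,n}" "\<exists>X\<in>f ` C \<union> g ` C. \<exists>y\<in>X. y \<le> n-2"
    using e1 e2 by blast+
  show ?thesis unfolding Good_def using d1 d2 d3 d4 by (intro conjI)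
qed

abbreviation "RR n \<equiv> nerve_realization {C. Good n C} (\<subseteq>)"

lemma hstep:
  assumes LF: "\<And>A. Lset n A \<Longrightarrow> Lset n (f A)"
    and MF: "\<And>A B. Lset n A \<Longrightarrow> Lset n B \<Longrightarrow> A \<subseteq> B \<Longrightarrow> f A \<subseteq> f B"
    and BF: "\<And>A. Lset n A \<Longrightarrow> A \<subseteq> {n-1,n} \<Longrightarrow> f A \<subseteq> {n-1,n}"
    and TF: "\<And>A x. Lset n A \<Longrightarrow> x \<in> A \<Longrightarrow> x \<le> n-2 \<Longrightarrow> \<exists>y\<in>f A. y \<le> n-2"
    and LG: "\<And>A. Lset n A \<Longrightarrow> Lset n (g A)"
    and MG: "\<And>A B. Lset n A \<Longrightarrow> Lset n B \<Longrightarrow> A \<subseteq> B \<Longrightarrow> g A \<subseteq> g B"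
    and BG: "\<And>A. Lset n A \<Longrightarrow> A \<subseteq> {n-1,n} \<Longrightarrow> g A \<subseteq> {n-1,n}"
    and TG: "\<And>A x. Lset n A \<Longrightarrow> x \<in> A \<Longrightarrow> x \<le> n-2 \<Longrightarrow> \<exists>y\<in>g A. y \<le> n-2"
    and XX: "\<And>A B. Lset n A \<Longrightarrow> Lset n B \<Longrightarrow> A \<subseteq> B \<or> B \<subseteq> A \<Longrightarrow> f A \<subseteq> g B \<or> g B \<subseteq> f A"
  shows "homotopic_with (\<lambda>_. True) (RR n) (RR n) (push {C. Good n C} (\<lambda>C. f ` C)) (push {C. Good n C} (\<lambda>C. g ` C))"
proof -
  have X': "\<And>A B. Lset n A \<Longrightarrow> Lset n B \<Longrightarrow> A \<subseteq> B \<or> B \<subseteq> A \<Longrightarrow> g A \<subseteq> f B \<or> f B \<subseteq> g A"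
    using XX by blast
  have h1: "homotopic_with (\<lambda>_. True) (RR n) (RR n) (push {C. Good n C} (\<lambda>C. f ` C)) (push {C. Good n C} (\<lambda>C. f ` C \<union> g ` C))"
    by (rule prism[OF finite_Good]) (auto intro: good_img[OF LF MF BF TF] good_union[OF LF MF BF TF LG MG XX])
  have h2: "homotopic_with (\<lambda>_. True) (RR n) (RR n) (push {C. Good n C} (\<lambda>C. g ` C)) (push {C. Good n C} (\<lambda>C. g ` C \<union> f ` C))"
    by (rule prism[OF finite_Good]) (auto intro: good_img[OF LG MG BG TG] good_union[OF LG MG BG TG LF MF X'])
  have e: "(\<lambda>C. g ` C \<union> f ` C) = (\<lambda>C. f ` C \<union> g ` C)" by (auto)
  show ?thesis using homotopic_with_trans[OF h1 h2[unfolded e, THEN homotopic_with_symD]] .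
qed




definition U :: "nat \<Rightarrow> nat \<Rightarrow> nat set \<Rightarrow> nat set" where
  "U n j A = (if n \<notin> A \<and> j \<le> card A then insert n A else A)"

definition D :: "nat \<Rightarrow> nat \<Rightarrow> nat set \<Rightarrow> nat set" where
  "D n j A = (if n-1 \<in> A \<and> card (insert n A) \<le> j then insert n A - {n-1} else insert n A)"

lemma Lset_fin: "Lset n A \<Longrightarrow> finite A"
  unfolding Lset_def using finite_subset by blast

lemma Lset_card: "Lset n A \<Longrightarrow> card (insert n A) \<le> Suc n"
proof -
  assume "Lset n A"
  then have "insert n A \<subseteq> {0..n}" by (auto simp: Lset_def)
  then have "card (insert n A) \<le> card {0..n}" by (intro card_mono) auto
  then show ?thesis by simp
qed

lemma Lset_insert_n:
  assumes "Lset n A"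
  shows "Lset n (insert n A)"
proof -
  have A: "A \<noteq> {}" "A \<subseteq> {0..n}" "A \<noteq> {0..n}" "A \<noteq> {0..<n}" using assms by (auto simp: Lset_def)
  have "insert n A \<noteq> {0..n}"
  proof
    assume e: "insert n A = {0..n}"
    have "{0..<n} \<subseteq> A"
    proof
      fix x assume "x \<in> {0..<n}"
      then have "x \<in> insert n A" "x \<noteq> n" using e by auto
      then show "x \<in> A" by auto
    qed
    then have "A = {0..<n} \<or> A = {0..n}" using between_n A(2) by blast
    then show False using A by blast
  qed
  moreover have "insert n A \<noteq> {0..<n}" by auto
  ultimately show ?thesis using A by (auto simp: Lset_def)
qed

context fixes n :: nat assumes n2: "2 \<le> n"
begin

lemma U_sup: "A \<subseteq> U n j A" by (auto simp: U_def)

lemma U_L: "Lset n A \<Longrightarrow> Lset n (U n j A)"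
  using Lset_insert_n by (auto simp: U_def)

lemma U_M: "Lset n A \<Longrightarrow> Lset n B \<Longrightarrow> A \<subseteq> B \<Longrightarrow> U n j A \<subseteq> U n j B"
proof -
  assume LA: "Lset n A" and LB: "Lset n B" and AB: "A \<subseteq> B"
  have "card A \<le> card B" using AB Lset_fin[OF LB] by (rule card_mono[rotated])
  then show ?thesis using AB unfolding U_def by auto
qed

lemma U_B: "A \<subseteq> {n-1,n} \<Longrightarrow> U n j A \<subseteq> {n-1,n}"
  by (auto simp: U_def)

lemma U_T: "x \<in> A \<Longrightarrow> x \<le> n-2 \<Longrightarrow> \<exists>y\<in>U n j A. y \<le> n-2"
  using U_sup by blast

lemma U_X:
  assumes LA: "Lset n A" and LB: "Lset n B" and c: "A \<subseteq> B \<or> B \<subseteq> A"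
  shows "U n (Suc j) A \<subseteq> U n j B \<or> U n j B \<subseteq> U n (Suc j) A"
proof -
  have le: "U n (Suc j) X \<subseteq> U n j X" for X by (auto simp: U_def)
  show ?thesis
  proof (cases "A \<subseteq> B")
    case True
    then show ?thesis using U_M[OF LA LB True, of "Suc j"] le[of B] by blast
  next
    case False
    then have BA: "B \<subset> A" using c by blast
    show ?thesis
    proof (cases "n \<notin> A \<and> card A = j")
      case True
      have "card B < card A" using BA Lset_fin[OF LA] by (rule psubset_card_mono[rotated])
      then have "U n j B = B" using True by (auto simp: U_def)
      moreover have "U n (Suc j) A = A" using True by (auto simp: U_def)
      ultimately show ?thesis using BA by blast
    next
      case False
      then have "U n (Suc j) A = U n j A" by (auto simp: U_def)
      then show ?thesis using U_M[OF LB LA, of j] BA by auto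
    qed
  qed
qed

lemma D_L: "Lset n A \<Longrightarrow> Lset n (D n j A)"
proof -
  assume LA: "Lset n A"
  have L1: "Lset n (insert n A)" by (rule Lset_insert_n[OF LA])
  have "Lset n (insert n A - {n-1})"
  proof -
    have "n \<in> insert n A - {n-1}" using n2 by auto
    moreover have "n - 1 \<in> {0..n}" "n-1 \<notin> insert n A - {n-1}" by auto
    moreover have "insert n A - {n-1} \<subseteq> {0..n}" using L1 unfolding Lset_def by blast
    ultimately have a: "n \<in> insert n A - {n-1}" and b: "n - 1 \<in> {0..n}" and c: "n-1 \<notin> insert n A - {n-1}"
      and d: "insert n A - {n-1} \<subseteq> {0..n}" by blast+
    have e1: "insert n A - {n-1} \<noteq> {}" using a by blast
    have e2: "insert n A - {n-1} \<noteq> {0..n}" using b c by metis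
    have e3: "insert n A - {n-1} \<noteq> {0..<n}" using a by (metis atLeastLessThan_iff less_irrefl)
    show ?thesis unfolding Lset_def using e1 e2 e3 d by blast
  qed
  then show ?thesis using L1 by (auto simp: D_def)
qed

lemma D_M: "Lset n A \<Longrightarrow> Lset n B \<Longrightarrow> A \<subseteq> B \<Longrightarrow> D n j A \<subseteq> D n j B"
proof -
  assume LA: "Lset n A" and LB: "Lset n B" and AB: "A \<subseteq> B"
  have "card (insert n A) \<le> card (insert n B)" using AB Lset_fin[OF LB] by (intro card_mono) auto
  then show ?thesis using AB n2 unfolding D_def by auto
qed

lemma D_B: "A \<subseteq> {n-1,n} \<Longrightarrow> D n j A \<subseteq> {n-1,n}"
  by (auto simp: D_def)

lemma D_T: "x \<in> A \<Longrightarrow> x \<le> n-2 \<Longrightarrow> \<exists>y\<in>D n j A. y \<le> n-2"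
proof -
  assume "x \<in> A" "x \<le> n-2"
  moreover have "x \<noteq> n-1" "x \<noteq> n" using n2 \<open>x \<le> n-2\<close> by auto
  ultimately have "x \<in> D n j A" by (auto simp: D_def)
  then show ?thesis using \<open>x \<le> n-2\<close> by blast
qed

lemma D_X:
  assumes LA: "Lset n A" and LB: "Lset n B" and c: "A \<subseteq> B \<or> B \<subseteq> A"
  shows "D n (Suc j) A \<subseteq> D n j B \<or> D n j B \<subseteq> D n (Suc j) A"
proof -
  have le: "D n (Suc j) X \<subseteq> D n j X" for X by (auto simp: D_def)
  show ?thesis
  proof (cases "A \<subseteq> B")
    case True
    then show ?thesis using D_M[OF LA LB True, of "Suc j"] le[of B] by blast
  next
    case False
    then have BA: "B \<subseteq> A" using c by blast
    show ?thesis
    proof (cases "n-1 \<in> A \<and> card (insert n A) = Suc j")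
      case True
      have fA: "finite (insert n A)" using Lset_fin[OF LA] by simp
      have fA': "D n (Suc j) A = insert n A - {n-1}" using True by (auto simp: D_def)
      show ?thesis
      proof (cases "insert n B = insert n A")
        case True
        have nn: "n - 1 \<noteq> n" using n2 by simp
        have "n-1 \<in> B \<longleftrightarrow> n-1 \<in> A"
        proof -
          have "n-1 \<in> insert n B \<longleftrightarrow> n-1 \<in> insert n A" using True by simp
          then show ?thesis using nn by simp
        qed
        then have "D n j B = D n j A" unfolding D_def using True by simp
        then show ?thesis using le[of A] by blast
      next
        case False
        then have "insert n B \<subset> insert n A" using BA by blast
        then have "card (insert n B) < card (insert n A)" using fA by (rule psubset_card_mono[rotated])
        then have "card (insert n B) \<le> j" using True by simp
        then have "D n j B \<subseteq> insert n B - {n-1}" using n2 by (auto simp: D_def)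
        then show ?thesis using fA' BA by blast
      qed
    next
      case False
      then have "card (insert n A) \<le> Suc j \<Longrightarrow> n - 1 \<in> A \<Longrightarrow> card (insert n A) \<le> j" by auto
      then have "D n (Suc j) A = D n j A" unfolding D_def by auto
      then show ?thesis using D_M[OF LB LA BA, of j] by auto
    qed
  qed
qed

end




lemma push_cong: "(\<And>C. C \<in> P \<Longrightarrow> r C = s C) \<Longrightarrow> push P r = push P s"
proof -
  assume h: "\<And>C. C \<in> P \<Longrightarrow> r C = s C"
  have "{x\<in>P. r x = y} = {x\<in>P. s x = y}" for y using h by auto
  then show ?thesis unfolding push_def by simp
qed

lemma hU: "2 \<le> n \<Longrightarrow> homotopic_with (\<lambda>_. True) (RR n) (RR n) (push {C. Good n C} (\<lambda>C. U n (Suc j) ` C)) (push {C. Good n C} (\<lambda>C. U n j ` C))"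
proof -
  assume n: "2 \<le> n"
  show ?thesis
    apply (rule hstep)
    subgoal by (rule U_L[OF n])
    subgoal by (rule U_M[OF n])
    subgoal using U_B[OF n] by blast
    subgoal using U_T[OF n] by blast
    subgoal by (rule U_L[OF n])
    subgoal by (rule U_M[OF n])
    subgoal using U_B[OF n] by blast
    subgoal using U_T[OF n] by blast
    subgoal by (rule U_X[OF n])
    done
qed

lemma hD: "2 \<le> n \<Longrightarrow> homotopic_with (\<lambda>_. True) (RR n) (RR n) (push {C. Good n C} (\<lambda>C. D n (Suc j) ` C)) (push {C. Good n C} (\<lambda>C. D n j ` C))"
proof -
  assume n: "2 \<le> n"
  show ?thesis
    apply (rule hstep)
    subgoal by (rule D_L[OF n])
    subgoal by (rule D_M[OF n])
    subgoal using D_B[OF n] by blast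
    subgoal using D_T[OF n] by blast
    subgoal by (rule D_L[OF n])
    subgoal by (rule D_M[OF n])
    subgoal using D_B[OF n] by blast
    subgoal using D_T[OF n] by blast
    subgoal by (rule D_X[OF n])
    done
qed

lemma U_chain: "2 \<le> n \<Longrightarrow> homotopic_with (\<lambda>_. True) (RR n) (RR n) (push {C. Good n C} (\<lambda>C. U n (Suc j) ` C)) (push {C. Good n C} (\<lambda>C. U n 0 ` C))"
proof (induction j)
  case 0 then show ?case by (rule hU)
next
  case (Suc j) then show ?case using homotopic_with_trans[OF hU[OF Suc.prems]] by blast
qed

lemma D_chain: "2 \<le> n \<Longrightarrow> homotopic_with (\<lambda>_. True) (RR n) (RR n) (push {C. Good n C} (\<lambda>C. D n 0 ` C)) (push {C. Good n C} (\<lambda>C. D n (Suc j) ` C))"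
proof (induction j)
  case 0 then show ?case using hD[OF 0, of 0] by (simp add: homotopic_with_sym)
next
  case (Suc j) then show ?case using homotopic_with_trans[OF _ hD[OF Suc.prems, of "Suc j", THEN homotopic_with_symD]] by blast
qed

definition W :: "nat \<Rightarrow> nat set" where "W n = {0..n} - {n-1}"
definition c0 :: "nat \<Rightarrow> nat set set" where "c0 n = {{n}, W n}"

lemma Lset_n: "2 \<le> n \<Longrightarrow> Lset n {n}"
proof -
  assume n: "2 \<le> n"
  have "(0::nat) \<in> {0..n}" "0 \<notin> {n}" using n by auto
  then have "{n} \<noteq> {0..n}" by metis
  moreover have "{n} \<noteq> {0..<n}" by (metis atLeastLessThan_iff insertI1 less_irrefl)
  ultimately show ?thesis unfolding Lset_def by auto
qed

lemma Lset_W: "2 \<le> n \<Longrightarrow> Lset n (W n)"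
proof -
  assume n: "2 \<le> n"
  have a: "n \<in> W n" "n - 1 \<in> {0..n}" "n - 1 \<notin> W n" "W n \<subseteq> {0..n}" using n by (auto simp: W_def)
  have e1: "W n \<noteq> {}" using a by blast
  have e2: "W n \<noteq> {0..n}" using a by metis
  have e3: "W n \<noteq> {0..<n}" using a by (metis atLeastLessThan_iff less_irrefl)
  show ?thesis unfolding Lset_def using e1 e2 e3 a by blast
qed

lemma good_c0: "2 \<le> n \<Longrightarrow> Good n (c0 n)"
proof -
  assume n: "2 \<le> n"
  have s: "{n} \<subseteq> W n" using n by (auto simp: W_def)
  have t: "0 \<in> W n" using n by (auto simp: W_def)
  have ch: "\<forall>A\<in>c0 n. \<forall>B\<in>c0 n. A \<subseteq> B \<or> B \<subseteq> A" using s by (auto simp: c0_def)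
  have L: "\<forall>A\<in>c0 n. Lset n A" using Lset_n[OF n] Lset_W[OF n] by (auto simp: c0_def)
  have b: "\<exists>A\<in>c0 n. A \<subseteq> {n-1,n}" by (auto simp: c0_def)
  have tp: "\<exists>A\<in>c0 n. \<exists>x\<in>A. x \<le> n-2" using t by (auto simp: c0_def)
  have ne: "c0 n \<noteq> {}" "finite (c0 n)" by (auto simp: c0_def)
  show ?thesis unfolding Good_def using ch L b tp ne by (intro conjI)
qed

lemma DK_props:
  assumes n: "2 \<le> n" and L: "Lset n A"
  shows "{n} \<subseteq> D n (Suc n) A" "D n (Suc n) A \<subseteq> W n"
proof -
  have c: "card (insert n A) \<le> Suc n" by (rule Lset_card[OF L])
  have sub: "A \<subseteq> {0..n}" using L by (auto simp: Lset_def)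
  show "{n} \<subseteq> D n (Suc n) A" using n by (auto simp: D_def)
  show "D n (Suc n) A \<subseteq> W n" using c sub n by (auto simp: D_def W_def)
qed

lemma good_E:
  assumes n: "2 \<le> n" and G: "Good n C"
  shows "Good n (D n (Suc n) ` C \<union> c0 n)"
proof -
  have G1: "Good n (D n (Suc n) ` C)"
    by (rule good_img[OF D_L[OF n] D_M[OF n] D_B[OF n] D_T[OF n] G])
  have G0: "Good n (c0 n)" by (rule good_c0[OF n])
  have L: "\<forall>A\<in>C. Lset n A" using G unfolding Good_def by blast
  have ch1: "\<forall>X\<in>D n (Suc n) ` C. \<forall>Y\<in>D n (Suc n) ` C. X \<subseteq> Y \<or> Y \<subseteq> X" using G1 unfolding Good_def by blast
  have ch0: "\<forall>X\<in>c0 n. \<forall>Y\<in>c0 n. X \<subseteq> Y \<or> Y \<subseteq> X" using G0 unfolding Good_def by blast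
  have chx: "\<forall>X\<in>D n (Suc n) ` C. \<forall>Y\<in>c0 n. X \<subseteq> Y \<or> Y \<subseteq> X"
    using DK_props[OF n] L by (auto simp: c0_def)
  have d1: "\<forall>X\<in>D n (Suc n) ` C \<union> c0 n. \<forall>Y\<in>D n (Suc n) ` C \<union> c0 n. X \<subseteq> Y \<or> Y \<subseteq> X"
    using ch1 ch0 chx by (metis Un_iff)
  have d2: "D n (Suc n) ` C \<union> c0 n \<noteq> {}" "finite (D n (Suc n) ` C \<union> c0 n)"
    using G unfolding Good_def by (auto simp: c0_def)
  have L1: "\<forall>X\<in>D n (Suc n) ` C. Lset n X" using G1 unfolding Good_def by blast
  have L0: "\<forall>X\<in>c0 n. Lset n X" using G0 unfolding Good_def by blast
  have d3: "\<forall>X\<in>D n (Suc n) ` C \<union> c0 n. Lset n X" using L1 L0 by blast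
  have b0: "\<exists>X\<in>c0 n. X \<subseteq> {n-1,n}" using G0 unfolding Good_def by blast
  have t0: "\<exists>X\<in>c0 n. \<exists>y\<in>X. y \<le> n-2" using G0 unfolding Good_def by blast
  have d4: "\<exists>X\<in>D n (Suc n) ` C \<union> c0 n. X \<subseteq> {n-1,n}" "\<exists>X\<in>D n (Suc n) ` C \<union> c0 n. \<exists>y\<in>X. y \<le> n-2"
    using b0 t0 by blast+
  show ?thesis unfolding Good_def using d1 d2 d3 d4 by (intro conjI)
qed

lemma contract:
  assumes n: "2 \<le> n"
  shows "homotopic_with (\<lambda>_. True) (RR n) (RR n) (push {C. Good n C} (\<lambda>C. C)) (push {C. Good n C} (\<lambda>C. c0 n))"
proof -
  let ?P = "{C. Good n C}"
  have LG: "Lset n A" if "C \<in> ?P" "A \<in> C" for C A using that unfolding Good_def by blast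
  have e1: "push ?P (\<lambda>C. C) = push ?P (\<lambda>C. U n (Suc (Suc n)) ` C)"
  proof (rule push_cong)
    fix C assume C: "C \<in> ?P"
    have "U n (Suc (Suc n)) A = A" if "A \<in> C" for A
    proof -
      have "card A \<le> card (insert n A)" using Lset_fin[OF LG[OF C that]] by (simp add: card_mono subset_insertI)
      then have "card A \<le> Suc n" using Lset_card[OF LG[OF C that]] by simp
      then show ?thesis by (simp add: U_def)
    qed
    then show "C = U n (Suc (Suc n)) ` C" by force
  qed
  have e2: "push ?P (\<lambda>C. U n 0 ` C) = push ?P (\<lambda>C. D n 0 ` C)"
  proof (rule push_cong)
    fix C assume C: "C \<in> ?P"
    have "U n 0 A = D n 0 A" if "A \<in> C" for A
    proof -
      have "finite (insert n A)" using Lset_fin[OF LG[OF C that]] by simp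
      then have "card (insert n A) \<noteq> 0" by simp
      then show ?thesis by (auto simp: U_def D_def insert_absorb)
    qed
    then show "U n 0 ` C = D n 0 ` C" by (simp add: image_def)
  qed
  have h1: "homotopic_with (\<lambda>_. True) (RR n) (RR n) (push ?P (\<lambda>C. C)) (push ?P (\<lambda>C. D n (Suc n) ` C))"
  proof -
    have a: "homotopic_with (\<lambda>_. True) (RR n) (RR n) (push ?P (\<lambda>C. C)) (push ?P (\<lambda>C. D n 0 ` C))"
      using U_chain[OF n, of "Suc n"] unfolding e1 e2 .
    show ?thesis by (rule homotopic_with_trans[OF a D_chain[OF n, of n]])
  qed
  have h2: "homotopic_with (\<lambda>_. True) (RR n) (RR n) (push ?P (\<lambda>C. D n (Suc n) ` C)) (push ?P (\<lambda>C. D n (Suc n) ` C \<union> c0 n))"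
    apply (rule prism[OF finite_Good])
    subgoal using good_img[OF D_L[OF n] D_M[OF n] D_B[OF n] D_T[OF n]] by simp
    subgoal using good_E[OF n] by simp
    subgoal by (rule image_mono)
    subgoal by (intro Un_mono image_mono subset_refl)
    subgoal by (rule Un_upper1)
    done
  have h3: "homotopic_with (\<lambda>_. True) (RR n) (RR n) (push ?P (\<lambda>C. c0 n)) (push ?P (\<lambda>C. D n (Suc n) ` C \<union> c0 n))"
    apply (rule prism[OF finite_Good])
    subgoal using good_c0[OF n] by simp
    subgoal using good_E[OF n] by simp
    subgoal by (rule subset_refl)
    subgoal by (intro Un_mono image_mono subset_refl)
    subgoal by (rule Un_upper2)
    done
  show ?thesis
    using homotopic_with_trans[OF homotopic_with_trans[OF h1 h2] h3[THEN homotopic_with_symD]] .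
qed




theorem lemma6p5:
  fixes n :: nat
  assumes "n \<ge> 2"
  shows "weakly_contractible_space
           (nerve_realization
              (pi_inv n {n - 1, n} \<inter> V_plus n (pi_inv n {0..n - 2}))
              (\<subseteq>))"
proof -
  note n = assms
  let ?P = "{C. Good n C}"
  define \<delta> where "\<delta> = (\<lambda>x. if x = c0 n then 1 else (0::real))"
  have c0P: "c0 n \<in> ?P" using good_c0[OF n] by simp
  have dR: "\<delta> \<in> Rset ?P"
  proof (rule Rset_intro[OF finite_Good])
    show "0 \<le> \<delta> x" for x by (simp add: \<delta>_def)
    show "\<delta> x = 0" if "x \<notin> ?P" for x using that c0P by (auto simp: \<delta>_def)
    show "sum \<delta> ?P = 1" unfolding \<delta>_def using c0P finite_Good by (simp add: sum.delta)
    show "x \<subseteq> y \<or> y \<subseteq> x" if "\<delta> x \<noteq> 0" "\<delta> y \<noteq> 0" for x y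
      using that by (auto simp: \<delta>_def split: if_splits)
  qed
  have pid: "push ?P (\<lambda>C. C) f = f" if f: "f \<in> Rset ?P" for f
  proof
    fix y
    show "push ?P (\<lambda>C. C) f y = f y"
    proof (cases "y \<in> ?P")
      case True
      then have "{x\<in>?P. x = y} = {y}" by auto
      then show ?thesis by (simp add: push_def)
    next
      case False
      then have "{x\<in>?P. x = y} = {}" by auto
      moreover have "f y = 0" using f False by (simp add: Rset_def)
      ultimately show ?thesis by (simp add: push_def)
    qed
  qed
  have pc: "push ?P (\<lambda>C. c0 n) f = \<delta>" if f: "f \<in> Rset ?P" for f
  proof
    fix y
    show "push ?P (\<lambda>C. c0 n) f y = \<delta> y"
    proof (cases "y = c0 n")
      case True
      then have "{x\<in>?P. c0 n = y} = ?P" by auto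
      then show ?thesis using Rset_sumP[OF finite_Good f] True by (simp add: push_def \<delta>_def)
    next
      case False
      then have "{x\<in>?P. c0 n = y} = {}" by auto
      then show ?thesis using False by (simp add: push_def \<delta>_def)
    qed
  qed
  have H: "homotopic_with (\<lambda>_. True) (RR n) (RR n) (push ?P (\<lambda>C. C)) (push ?P (\<lambda>C. c0 n))"
    by (rule contract[OF n])
  have "weakly_contractible_space (RR n)"
    unfolding weakly_contractible_space_def
  proof (intro conjI allI impI)
    show "topspace (RR n) \<noteq> {}" using dR by (auto simp: topspace_R)
    fix k and h :: "(nat \<Rightarrow> real) \<Rightarrow> (nat set set \<Rightarrow> real)"
    assume h: "continuous_map (nsphere k) (RR n) h"
    have hh: "homotopic_with (\<lambda>_. True) (nsphere k) (RR n) (push ?P (\<lambda>C. C) \<circ> h) (push ?P (\<lambda>C. c0 n) \<circ> h)"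
      by (rule homotopic_with_compose_continuous_map_right[OF H h]) simp
    have hx: "h x \<in> Rset ?P" if "x \<in> topspace (nsphere k)" for x
    proof -
      have "h x \<in> topspace (RR n)" using continuous_map_image_subset_topspace[OF h] that by blast
      then show ?thesis by (simp only: topspace_R)
    qed
    have "homotopic_with (\<lambda>_. True) (nsphere k) (RR n) h (\<lambda>_. \<delta>)"
    proof (rule homotopic_with_eq[OF hh])
      fix x assume x: "x \<in> topspace (nsphere k)"
      show "h x = (push ?P (\<lambda>C. C) \<circ> h) x" using pid[OF hx[OF x]] by simp
      show "\<delta> = (push ?P (\<lambda>C. c0 n) \<circ> h) x" using pc[OF hx[OF x]] by simp
    qed simp
    then show "\<exists>a. homotopic_with (\<lambda>_. True) (nsphere k) (RR n) h (\<lambda>_. a)" by blast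
  qed
  then show ?thesis using P_eq[OF n] by simp
qed


end
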